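(* Let $K\ge2$, $0<q<p$ with $p+(K-1)q=1$, $\phi\in\Delta$ with $\phi_1\le\cdots\le\phi_K$, and $n\in\{1,\dots,K-1\}$. If $\theta^{[n-1]}\in\Delta$, then $\theta^{[n]}\in\Delta$ and $D_{KL}(\phi,\mathcal{M}(\theta^{[n-1]}))\le D_{KL}(\phi,\mathcal{M}(\theta^{[n]}))$.
   Context: $\Delta=\{\theta\in\mathbb{R}^K:\theta_i\ge0,\sum_i\theta_i=1\}$. $\mathcal{M}(\theta)_y=q+(p-q)\theta_y$. $D_{KL}(\phi,\psi)=\sum_i\phi_i\log(\phi_i/\psi_i)$ with $0\log(0/\cdot)=0$. For sorted $\phi$ and $m\in\{0,\dots,K-1\}$: $\lambda^{[m]}=\frac{(p-q)\sum_{i>m}\phi_i}{1-mq}$, and $\theta^{[m]}_i=0$ for $i\le m$, $\theta^{[m]}_i=\frac{\phi_i}{\lambda^{[m]}}-\frac{q}{p-q}$ for $i>m$. *)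

theory Defs
  imports Complex_Main
begin

text \<open>Vectors in R^K are functions nat => real indexed by {1..K}.\<close>

definition simplex :: "nat \<Rightarrow> (nat \<Rightarrow> real) set" where
  "simplex K = {\<theta>. (\<forall>i\<in>{1..K}. 0 \<le> \<theta> i) \<and> (\<Sum>i=1..K. \<theta> i) = 1}"

definition Mch :: "real \<Rightarrow> real \<Rightarrow> (nat \<Rightarrow> real) \<Rightarrow> nat \<Rightarrow> real" where
  "Mch p q \<theta> y = q + (p - q) * \<theta> y"

definition DKL :: "nat \<Rightarrow> (nat \<Rightarrow> real) \<Rightarrow> (nat \<Rightarrow> real) \<Rightarrow> real" where
  "DKL K \<phi> \<psi> = (\<Sum>i=1..K. if \<phi> i = 0 then 0 else \<phi> i * ln (\<phi> i / \<psi> i))"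

definition lam :: "nat \<Rightarrow> real \<Rightarrow> real \<Rightarrow> (nat \<Rightarrow> real) \<Rightarrow> nat \<Rightarrow> real" where
  "lam K p q \<phi> m = (p - q) * (\<Sum>i\<in>{m<..K}. \<phi> i) / (1 - real m * q)"

definition theta :: "nat \<Rightarrow> real \<Rightarrow> real \<Rightarrow> (nat \<Rightarrow> real) \<Rightarrow> nat \<Rightarrow> nat \<Rightarrow> real" where
  "theta K p q \<phi> m i = (if i \<le> m then 0 else \<phi> i / lam K p q \<phi> m - q / (p - q))"

end

theory Submission
  imports Defs
begin

lemma split_sum:
  fixes f :: "nat \<Rightarrow> real"
  assumes "m \<le> K"
  shows "(\<Sum>i=1..K. f i) = (\<Sum>i=1..m. f i) + (\<Sum>i\<in>{m<..K}. f i)"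
proof -
  have "{1..K} = {1..m} \<union> {m<..K}" using assms by auto
  moreover have "{1..m} \<inter> {m<..K} = {}" by auto
  ultimately show ?thesis by (simp add: sum.union_disjoint)
qed

lemma logsum:
  fixes a S q c :: real
  assumes "0 \<le> a" "0 < S" "0 < q" "0 < c"
  shows "(a + S) * ln ((a + S) / (q + c)) \<le> a * ln (a / q) + S * ln (S / c)"
proof (cases "a = 0")
  case True
  have "ln (S / (q + c)) \<le> ln (S / c)"
    using assms by (simp add: frac_le divide_left_mono)
  then show ?thesis using True assms by (simp add: mult_left_mono)
next
  case False
  hence a: "0 < a" using assms by simp
  have e1: "(a + S) * ln ((a + S) / (q + c)) - a * ln (a / q) - S * ln (S / c)
      = a * ln (q * (a + S) / (a * (q + c))) + S * ln (c * (a + S) / (S * (q + c)))"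
  proof -
    have p1: "ln (q * (a + S) / (a * (q + c))) = ln q + ln (a + S) - ln a - ln (q + c)"
      using a assms by (simp add: ln_div ln_mult)
    have p2: "ln (c * (a + S) / (S * (q + c))) = ln c + ln (a + S) - ln S - ln (q + c)"
      using a assms by (simp add: ln_div ln_mult)
    have p3: "ln ((a + S) / (q + c)) = ln (a + S) - ln (q + c)" using a assms by (simp add: ln_div)
    have p4: "ln (a / q) = ln a - ln q" using a assms by (simp add: ln_div)
    have p5: "ln (S / c) = ln S - ln c" using a assms by (simp add: ln_div)
    show ?thesis unfolding p1 p2 p3 p4 p5 by (simp add: algebra_simps)
  qed
  have l1: "ln (q * (a + S) / (a * (q + c))) \<le> q * (a + S) / (a * (q + c)) - 1"
    by (rule ln_le_minus_one) (use a assms in simp)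
  have l2: "ln (c * (a + S) / (S * (q + c))) \<le> c * (a + S) / (S * (q + c)) - 1"
    by (rule ln_le_minus_one) (use a assms in simp)
  have "a * ln (q * (a + S) / (a * (q + c))) + S * ln (c * (a + S) / (S * (q + c)))
      \<le> a * (q * (a + S) / (a * (q + c)) - 1) + S * (c * (a + S) / (S * (q + c)) - 1)"
    using l1 l2 a assms by (intro add_mono mult_left_mono) auto
  also have "\<dots> = q * (a + S) / (q + c) - a + (c * (a + S) / (q + c) - S)"
  proof -
    have "a * (q * (a + S) / (a * (q + c))) = q * (a + S) / (q + c)" using a by simp
    moreover have "S * (c * (a + S) / (S * (q + c))) = c * (a + S) / (q + c)" using assms by simp
    ultimately show ?thesis by (simp add: right_diff_distrib)
  qed
  also have "\<dots> = 0" using a assms by (simp add: field_simps)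
  finally show ?thesis using e1 by linarith
qed

lemma frac_helper:
  fixes q d X Y :: real
  assumes "0 < d" "0 < X"
  shows "(q / d \<le> Y / (d * X)) = (q * X \<le> Y)"
proof -
  have "q / d = (q * X) / (d * X)" using assms by simp
  hence "(q / d \<le> Y / (d * X)) = ((q * X) / (d * X) \<le> Y / (d * X))" by simp
  also have "\<dots> = (q * X \<le> Y)" using mult_pos_pos[OF assms] by (subst divide_le_cancel) auto
  finally show ?thesis .
qed

theorem lemma4:
  fixes K n :: nat and p q :: real and \<phi> :: "nat \<Rightarrow> real"
  assumes "K \<ge> 2" and "0 < q" and "q < p" and "p + (real K - 1) * q = 1"
    and "\<phi> \<in> simplex K"
    and "\<forall>i j. 1 \<le> i \<longrightarrow> i \<le> j \<longrightarrow> j \<le> K \<longrightarrow> \<phi> i \<le> \<phi> j"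
    and "1 \<le> n" and "n \<le> K - 1"
    and "theta K p q \<phi> (n - 1) \<in> simplex K"
  shows "theta K p q \<phi> n \<in> simplex K \<and>
         DKL K \<phi> (Mch p q (theta K p q \<phi> (n - 1))) \<le> DKL K \<phi> (Mch p q (theta K p q \<phi> n))"
proof -
  define S where "S m = (\<Sum>i\<in>{m<..K}. \<phi> i)" for m
  define c where "c m = 1 - real m * q" for m
  have nn: "\<And>i. i \<in> {1..K} \<Longrightarrow> 0 \<le> \<phi> i" and s1: "(\<Sum>i=1..K. \<phi> i) = 1"
    using assms(5) by (auto simp: simplex_def)
  have mono: "\<And>i. 1 \<le> i \<Longrightarrow> i \<le> K \<Longrightarrow> \<phi> i \<le> \<phi> K" using assms(6) by auto
  have "(\<Sum>i=1..K. \<phi> i) \<le> (\<Sum>i=1..K. \<phi> K)" by (rule sum_mono) (use mono in auto)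
  hence "1 \<le> real K * \<phi> K" using s1 by simp
  hence phiK: "0 < \<phi> K"
  proof (rule contrapos_pp)
    assume "\<not> 0 < \<phi> K"
    hence "real K * \<phi> K \<le> 0" by (simp add: mult_nonneg_nonpos)
    thus "\<not> 1 \<le> real K * \<phi> K" by linarith
  qed
  have Spos: "0 < S m" if "m < K" for m
  proof -
    have "\<phi> K \<le> S m" unfolding S_def
      by (rule member_le_sum) (use that nn in auto)
    thus ?thesis using phiK by simp
  qed
  have cpos: "0 < c m" if "m < K" for m
  proof -
    have "real m * q \<le> (real K - 1) * q" using that assms(2) by (intro mult_right_mono) auto
    thus ?thesis unfolding c_def using assms(2,3,4) by linarith
  qed
  have lam_eq: "lam K p q \<phi> m = (p - q) * S m / c m" for m
    unfolding lam_def S_def c_def by simp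
  have M1: "Mch p q (theta K p q \<phi> m) i = q" if "i \<le> m" for m i
    using that by (simp add: Mch_def theta_def)
  have M2: "Mch p q (theta K p q \<phi> m) i = \<phi> i * c m / S m" if "m < i" "m < K" for m i
  proof -
    have pq: "p - q \<noteq> 0" using assms(3) by simp
    have "Mch p q (theta K p q \<phi> m) i = q + (p - q) * (\<phi> i / ((p - q) * S m / c m) - q / (p - q))"
      using that by (simp add: Mch_def theta_def lam_eq)
    also have "\<dots> = q + (p - q) * (\<phi> i / ((p - q) * S m / c m)) - q"
      using pq by (simp add: right_diff_distrib)
    also have "\<dots> = \<phi> i * c m / S m" using pq Spos[OF that(2)] by (simp add: field_simps)
    finally show ?thesis .
  qed
  have D: "DKL K \<phi> (Mch p q (theta K p q \<phi> m)) =
      (\<Sum>i=1..m. \<phi> i * ln (\<phi> i / q)) + S m * ln (S m / c m)" if "m < K" for m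
  proof -
    have "DKL K \<phi> (Mch p q (theta K p q \<phi> m)) =
        (\<Sum>i=1..K. \<phi> i * ln (\<phi> i / Mch p q (theta K p q \<phi> m) i))"
      unfolding DKL_def by (rule sum.cong) auto
    also have "\<dots> = (\<Sum>i=1..m. \<phi> i * ln (\<phi> i / Mch p q (theta K p q \<phi> m) i))
        + (\<Sum>i\<in>{m<..K}. \<phi> i * ln (\<phi> i / Mch p q (theta K p q \<phi> m) i))"
      using that by (intro split_sum) simp
    also have "(\<Sum>i=1..m. \<phi> i * ln (\<phi> i / Mch p q (theta K p q \<phi> m) i))
        = (\<Sum>i=1..m. \<phi> i * ln (\<phi> i / q))" by (rule sum.cong) (auto simp: M1)
    also have "(\<Sum>i\<in>{m<..K}. \<phi> i * ln (\<phi> i / Mch p q (theta K p q \<phi> m) i))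
        = (\<Sum>i\<in>{m<..K}. \<phi> i * ln (S m / c m))"
    proof (rule sum.cong)
      fix i assume i: "i \<in> {m<..K}"
      show "\<phi> i * ln (\<phi> i / Mch p q (theta K p q \<phi> m) i) = \<phi> i * ln (S m / c m)"
      proof (cases "\<phi> i = 0")
        case False
        have "\<phi> i / Mch p q (theta K p q \<phi> m) i = S m / c m"
          using False i M2[of m i] that Spos[OF that] cpos[OF that] by simp
        thus ?thesis by simp
      qed simp
    qed simp
    also have "\<dots> = S m * ln (S m / c m)" unfolding S_def by (simp add: sum_distrib_right)
    finally show ?thesis .
  qed
  have nK: "n < K" using assms(1,8) by linarith
  have n1K: "n - 1 < K" using nK by linarith
  have Sn1: "S (n - 1) = \<phi> n + S n"
  proof -
    have "{n - 1<..K} = insert n {n<..K}" using assms(7) nK by auto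
    thus ?thesis unfolding S_def by simp
  qed
  have cn1: "c (n - 1) = q + c n" unfolding c_def using assms(7)
    by (simp add: of_nat_diff algebra_simps)
  have phin: "0 \<le> \<phi> n" using nn assms(7) nK by auto
  have t0: "0 \<le> theta K p q \<phi> (n - 1) n" using assms(9,7) nK by (auto simp: simplex_def)
  moreover have "\<not> n \<le> n - 1" using assms(7) by simp
  ultimately have "0 \<le> \<phi> n / lam K p q \<phi> (n - 1) - q / (p - q)"
    unfolding theta_def by (simp only: if_False)
  hence "q / (p - q) \<le> \<phi> n / ((p - q) * S (n - 1) / c (n - 1))"
    unfolding lam_eq by simp
  hence "q / (p - q) \<le> \<phi> n * c (n - 1) / ((p - q) * S (n - 1))" by simp
  hence key0: "q * S (n - 1) \<le> \<phi> n * c (n - 1)"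
    using Spos[OF n1K] assms(2,3) frac_helper[of "p - q" "S (n - 1)" q] by simp
  hence key: "q * S n \<le> \<phi> n * c n" using Sn1 cn1 by (simp add: algebra_simps)
  have nonneg: "0 \<le> theta K p q \<phi> n i" if "i \<in> {1..K}" for i
  proof (cases "i \<le> n")
    case False
    have "\<phi> n \<le> \<phi> i" using assms(6,7) that False by auto
    hence "\<phi> n * c n \<le> \<phi> i * c n" using cpos[OF nK] by (simp add: mult_right_mono)
    hence "q * S n \<le> \<phi> i * c n" using key by linarith
    hence "q / (p - q) \<le> \<phi> i * c n / ((p - q) * S n)"
      using Spos[OF nK] assms(2,3) frac_helper[of "p - q" "S n" q] by simp
    thus ?thesis using False by (simp add: theta_def lam_eq)
  qed (simp add: theta_def)
  have "(\<Sum>i=1..K. theta K p q \<phi> n i) = (\<Sum>i=1..n. theta K p q \<phi> n i) + (\<Sum>i\<in>{n<..K}. theta K p q \<phi> n i)"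
    using nK by (intro split_sum) simp
  also have "(\<Sum>i=1..n. theta K p q \<phi> n i) = 0" by (simp add: theta_def)
  also have "(\<Sum>i\<in>{n<..K}. theta K p q \<phi> n i) = (\<Sum>i\<in>{n<..K}. \<phi> i * (c n / ((p - q) * S n)) - q / (p - q))"
    by (rule sum.cong) (auto simp: theta_def lam_eq)
  also have "\<dots> = S n * (c n / ((p - q) * S n)) - real (K - n) * (q / (p - q))"
  proof -
    define k where "k = c n / ((p - q) * S n)"
    have "(\<Sum>i\<in>{n<..K}. \<phi> i * k - q / (p - q)) = (\<Sum>i\<in>{n<..K}. \<phi> i * k) - (\<Sum>i\<in>{n<..K}. q / (p - q))"
      by (rule sum_subtractf)
    also have "(\<Sum>i\<in>{n<..K}. \<phi> i * k) = S n * k" unfolding S_def by (rule sum_distrib_right[symmetric])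
    finally show ?thesis unfolding k_def by simp
  qed
  also have "\<dots> = 1"
  proof -
    have pq: "p - q \<noteq> 0" using assms(3) by simp
    have a1: "S n * (c n / ((p - q) * S n)) = c n / (p - q)" using Spos[OF nK] by simp
    have a2: "real (K - n) * (q / (p - q)) = (real K - real n) * q / (p - q)"
      using nK by (simp add: of_nat_diff)
    have a3: "c n - (real K - real n) * q = p - q" unfolding c_def using assms(4)
      by (simp add: algebra_simps)
    have "c n / (p - q) - (real K - real n) * q / (p - q) = (c n - (real K - real n) * q) / (p - q)"
      by (simp add: diff_divide_distrib)
    thus ?thesis unfolding a1 a2 a3 using pq by simp
  qed
  finally have "theta K p q \<phi> n \<in> simplex K" using nonneg by (simp add: simplex_def)
  moreover have "DKL K \<phi> (Mch p q (theta K p q \<phi> (n - 1))) \<le> DKL K \<phi> (Mch p q (theta K p q \<phi> n))"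
  proof -
    have e: "(\<Sum>i=1..n. \<phi> i * ln (\<phi> i / q)) = (\<Sum>i=1..n-1. \<phi> i * ln (\<phi> i / q)) + \<phi> n * ln (\<phi> n / q)"
    proof -
      obtain n' where n': "n = Suc n'" using assms(7) by (cases n) auto
      show ?thesis unfolding n' by simp
    qed
    have "S (n - 1) * ln (S (n - 1) / c (n - 1)) \<le> \<phi> n * ln (\<phi> n / q) + S n * ln (S n / c n)"
      using logsum[OF phin Spos[OF nK] assms(2) cpos[OF nK]] Sn1 cn1 by simp
    thus ?thesis using D[OF nK] D[OF n1K] e by simp
  qed
  ultimately show ?thesis by blast
qed

end
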